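(* For every fixed positive integer $c$, and for every positive integer $k$ large enough compared to $c$, there exists a tournament $T$ on $2k+c$ vertices such that $\mathrm{sinv}'_k(T) > \frac{1}{2}\log(2k+c) - \log(2c)$. In particular, for every fixed positive integer $c$, $m'_k(2k+c)$ is unbounded as $k\to\infty$.
   Context: Logarithms are to base 2. A tournament is an orientation of a complete graph. For a digraph $D$ and $X \subseteq V(D)$, inverting $X$ means reversing the direction of every arc of $D$ with both endvertices in $X$. A digraph $D$ is $k$-arc-strong if for every partition $(V_1,V_2)$ of $V(D)$ into nonempty sets there are at least $k$ arcs from $V_1$ to $V_2$. $\mathrm{sinv}'_k(D)$ is the minimum number of sets whose successive inversion transforms $D$ into a $k$-arc-strong digraph. For $n\ge 2k+1$, $m'_k(n)=\max\{\mathrm{sinv}'_k(T): T \text{ tournament of order } n\}$. *)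

theory Defs
  imports Complex_Main
begin

definition tournament :: "'a set \<Rightarrow> ('a \<times> 'a) set \<Rightarrow> bool" where
  "tournament V A \<longleftrightarrow> finite V \<and> A \<subseteq> V \<times> V \<and> (\<forall>v. (v, v) \<notin> A) \<and>
     (\<forall>u\<in>V. \<forall>v\<in>V. u \<noteq> v \<longrightarrow> ((u, v) \<in> A \<longleftrightarrow> (v, u) \<notin> A))"

definition invert :: "('a \<times> 'a) set \<Rightarrow> 'a set \<Rightarrow> ('a \<times> 'a) set" where
  "invert A X = {(u, v) \<in> A. \<not> (u \<in> X \<and> v \<in> X)} \<union> {(v, u) | u v. (u, v) \<in> A \<and> u \<in> X \<and> v \<in> X}"

definition arc_strong :: "nat \<Rightarrow> 'a set \<Rightarrow> ('a \<times> 'a) set \<Rightarrow> bool" where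
  "arc_strong k V A \<longleftrightarrow> (\<forall>V1. V1 \<subseteq> V \<and> V1 \<noteq> {} \<and> V1 \<noteq> V \<longrightarrow>
       card {(u, v) \<in> A. u \<in> V1 \<and> v \<in> V - V1} \<ge> k)"

definition sinv' :: "nat \<Rightarrow> 'a set \<Rightarrow> ('a \<times> 'a) set \<Rightarrow> nat" where
  "sinv' k V A = (LEAST m. \<exists>Xs. length Xs = m \<and> set Xs \<subseteq> Pow V \<and> arc_strong k V (foldl invert A Xs))"

text \<open>m'_k(n): maximum over tournaments of order n (vertex set {0..<n} w.l.o.g.).\<close>
definition m' :: "nat \<Rightarrow> nat \<Rightarrow> nat" where
  "m' k n = Max {sinv' k {0..<n} A | A. tournament {0..<n} A}"

end

theory Submission
  imports Defs
begin



lemma central_even: "((2*r) choose r)^2 * (2*r+1) \<le> (16::nat)^r"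
proof (induction r)
  case 0 then show ?case by simp
next
  case (Suc r)
  define a where "a = (2*r) choose r"
  define b where "b = ((2*r+2) choose (r+1))"
  define m where "m = ((2*r+1) choose r)"
  have e1: "(r+1) * b = (2*r+2) * m"
    using Suc_times_binomial[of r "2*r+1"] b_def m_def by (simp del: binomial_Suc_Suc)
  have e2: "(2*r+1) * a = ((2*r+1) choose (r+1)) * (r+1)"
    using Suc_times_binomial_eq[of "2*r" r] a_def by (simp del: binomial_Suc_Suc)
  have e3: "((2*r+1) choose (r+1)) = m"
    using binomial_symmetric[of r "2*r+1"] m_def by simp
  have "(r+1) * (b * (r+1)) = (r+1) * (2 * (2*r+1) * a)"
  proof -
    have "(r+1) * (b * (r+1)) = (2*r+2) * (m * (r+1))" using e1 by (metis mult.assoc)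
    also have "\<dots> = (2*r+2) * ((2*r+1) * a)" using e2 e3 by simp
    finally show ?thesis by simp
  qed
  then have hb: "b * (r+1) = 2*(2*r+1)*a" by (metis add_is_0 mult_left_cancel zero_neq_one)
  have IH: "a^2 * (2*r+1) \<le> 16^r" using Suc.IH a_def by simp
  have "(b^2 * (2*r+3)) * (r+1)^2 = (b*(r+1))^2 * (2*r+3)" by (simp add: power2_eq_square algebra_simps)
  also have "\<dots> = (2*(2*r+1)*a)^2 * (2*r+3)" using hb by simp
  also have "\<dots> = 4 * (a^2 * (2*r+1)) * ((2*r+1)*(2*r+3))" by (simp add: power2_eq_square algebra_simps)
  also have "\<dots> \<le> 4 * 16^r * ((2*r+1)*(2*r+3))" using IH by simp
  also have "\<dots> \<le> 4 * 16^r * (4*(r+1)^2)" by (simp add: power2_eq_square algebra_simps)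
  also have "\<dots> = 16^(Suc r) * (r+1)^2" by simp
  finally have "(b^2 * (2*r+3)) * (r+1)^2 \<le> 16^(Suc r) * (r+1)^2" .
  then have "b^2 * (2*r+3) \<le> 16^(Suc r)" by simp
  moreover have "(2 * Suc r choose Suc r) = b" using b_def by simp
  ultimately show ?case by (simp add: algebra_simps)
qed

lemma central_bound: "(m choose (m div 2))^2 * (m+1) \<le> (4::nat)^m"
proof (cases "even m")
  case True
  then obtain r where m: "m = 2*r" by blast
  have "(4::nat)^m = 16^r" using m by (simp add: power_mult)
  then show ?thesis using central_even[of r] m by simp
next
  case False
  then obtain r where m: "m = 2*r+1" using oddE by blast
  have md: "m div 2 = r" using m by simp
  define a where "a = (2*r) choose r"
  define b where "b = ((2*r+1) choose r)"
  have e2: "(2*r+1) * a = ((2*r+1) choose (r+1)) * (r+1)"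
    using Suc_times_binomial_eq[of "2*r" r] a_def by (simp del: binomial_Suc_Suc)
  have e3: "((2*r+1) choose (r+1)) = b"
    using binomial_symmetric[of r "2*r+1"] b_def by simp
  have hb: "b * (r+1) = (2*r+1)*a" using e2 e3 by simp
  have IH: "a^2 * (2*r+1) \<le> 16^r" using central_even[of r] a_def by simp
  have "(b^2 * (2*r+2)) * (r+1)^2 = (b*(r+1))^2 * (2*r+2)" by (simp add: power2_eq_square algebra_simps)
  also have "\<dots> = ((2*r+1)*a)^2 * (2*r+2)" using hb by simp
  also have "\<dots> = 2 * (a^2*(2*r+1)) * ((2*r+1)*(r+1))" 
    by (simp add: power2_eq_square algebra_simps)
  also have "\<dots> \<le> 2 * 16^r * ((2*r+1)*(r+1))" by (intro mult_right_mono mult_left_mono IH) simp_all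
  also have "\<dots> \<le> 2 * 16^r * (2*(r+1)^2)" by (simp add: power2_eq_square algebra_simps)
  also have "\<dots> = 4^m * (r+1)^2" using m by (simp add: power_mult power_add)
  finally have "b^2*(2*r+2) \<le> 4^m" by simp
  then show ?thesis using m md b_def by (simp add: algebra_simps)
qed

lemma binom_real_bound: "real (m choose d) \<le> 2^m / sqrt (m+1)"
proof -
  have "(m choose d)^2 * (m+1) \<le> 4^m"
    using central_bound[of m] binomial_maximum[of m d]
    by (meson le_trans mult_le_mono1 power_mono zero_le)
  then have "real ((m choose d)^2 * (m+1)) \<le> real (4^m)" by (simp only: of_nat_le_iff)
  moreover have "(2::real)^m * 2^m = 4^m" by (simp add: power_mult_distrib[symmetric])
  ultimately have h: "real (m choose d)^2 * (m+1) \<le> (2^m)^2" 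
    by (simp add: power2_eq_square algebra_simps)
  have "real (m choose d) * sqrt (m+1) \<le> 2^m"
  proof -
    have "(real (m choose d) * sqrt (m+1))^2 \<le> (2^m)^2"
      using h by (simp add: power_mult_distrib)
    then show ?thesis using power2_le_imp_le by fastforce
  qed
  then show ?thesis by (simp add: field_simps)
qed



lemma succ_pow_bound: "(real n + 1)^n \<le> 3 * real n ^ n"
proof (cases "n = 0")
  case True then show ?thesis by simp
next
  case False
  then have np: "real n > 0" by simp
  have "(1 + 1 / real n) ^ n \<le> exp (1 / real n) ^ n"
    by (intro power_mono) (use np in auto)
  also have "\<dots> = exp 1" using np by (simp add: exp_of_nat_mult[symmetric])
  also have "\<dots> \<le> 3" by (rule exp_le)
  finally have h: "(1 + 1 / real n) ^ n \<le> 3" .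
  have "(real n + 1)^n = real n ^ n * (1 + 1 / real n)^n"
    using np by (simp add: power_mult_distrib[symmetric] field_simps)
  also have "\<dots> \<le> real n ^ n * 3" using h by (intro mult_left_mono) auto
  finally show ?thesis by simp
qed

lemma pow_fact_bound: "real n ^ n \<le> 3^n * fact n"
proof (induction n)
  case 0 then show ?case by simp
next
  case (Suc n)
  have "real (Suc n) ^ Suc n = (real n + 1) * (real n + 1)^n" by (simp add: add.commute)
  also have "\<dots> \<le> (real n + 1) * (3 * real n ^ n)" 
    by (intro mult_left_mono succ_pow_bound) auto
  also have "\<dots> \<le> (real n + 1) * (3 * (3^n * fact n))"
    using Suc.IH by (intro mult_left_mono) auto
  also have "\<dots> = 3 ^ Suc n * fact (Suc n)" by (simp add: algebra_simps)
  finally show ?case .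
qed

lemma pow_fact_strict: "n \<ge> 1 \<Longrightarrow> real n ^ n < 4^n * fact n"
proof -
  assume "n \<ge> 1"
  have "(3::real)^n < 4^n" using \<open>n \<ge> 1\<close> by (intro power_strict_mono) auto
  then have "3^n * fact n < (4::real)^n * fact n" by simp
  then show ?thesis using pow_fact_bound[of n] by linarith
qed

lemma final_prod_bound:
  assumes n1: "n \<ge> 1" and x0: "x \<ge> 0" and xb: "x \<le> sqrt (real n) / 2"
  shows "(\<Prod>m<n. x / sqrt (real m + 1)) < 1"
proof -
  have pf: "(\<Prod>m<n. sqrt (real m + 1)) = sqrt (fact n)"
  proof (induction n)
    case 0 then show ?case by simp
  next
    case (Suc n) then show ?case by (simp add: real_sqrt_mult[symmetric] algebra_simps)
  qed
  have "(\<Prod>m<n. x / sqrt (real m + 1)) = x^n / sqrt (fact n)"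
    by (simp add: prod_dividef pf)
  also have "x^n \<le> (sqrt (real n) / 2)^n" using x0 xb by (intro power_mono) auto
  then have "x^n / sqrt (fact n) \<le> (sqrt (real n) / 2)^n / sqrt (fact n)"
    by (intro divide_right_mono) auto
  also have "(sqrt (real n) / 2)^n = sqrt (real n ^ n / 4^n)"
    by (simp add: real_sqrt_power real_sqrt_divide power_divide)
  also have "sqrt (real n ^ n / 4^n) < sqrt (fact n)"
    using pow_fact_strict[OF n1] by (simp add: field_simps)
  then have "sqrt (real n ^ n / 4^n) / sqrt (fact n) < 1" by simp
  finally show ?thesis .
qed



definition outdeg :: "(nat \<times> nat) set \<Rightarrow> nat \<Rightarrow> nat" where
  "outdeg A v = card {w. (v, w) \<in> A}"

lemma tour_sub: "tournament V A \<Longrightarrow> (u, v) \<in> A \<Longrightarrow> u \<in> V \<and> v \<in> V"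
  unfolding tournament_def by blast
lemma tour_irr: "tournament V A \<Longrightarrow> (v, v) \<notin> A"
  unfolding tournament_def by blast
lemma tour_tot: "tournament V A \<Longrightarrow> u \<in> V \<Longrightarrow> v \<in> V \<Longrightarrow> u \<noteq> v \<Longrightarrow> (u, v) \<in> A \<or> (v, u) \<in> A"
  unfolding tournament_def by blast
lemma tour_asym: "tournament V A \<Longrightarrow> (u, v) \<in> A \<Longrightarrow> (v, u) \<notin> A"
  unfolding tournament_def by (metis mem_Sigma_iff subsetD)
lemma tour_fin: "tournament V A \<Longrightarrow> finite V"
  unfolding tournament_def by blast
lemma tour_intro:
  assumes "finite V" "\<And>u v. (u, v) \<in> A \<Longrightarrow> u \<in> V \<and> v \<in> V" "\<And>v. (v, v) \<notin> A"
    "\<And>u v. u \<in> V \<Longrightarrow> v \<in> V \<Longrightarrow> u \<noteq> v \<Longrightarrow> (u, v) \<in> A \<or> (v, u) \<in> A"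
    "\<And>u v. (u, v) \<in> A \<Longrightarrow> (v, u) \<notin> A"
  shows "tournament V A"
proof -
  have "A \<subseteq> V \<times> V" using assms(2) by auto
  moreover have "\<forall>u\<in>V. \<forall>v\<in>V. u \<noteq> v \<longrightarrow> ((u, v) \<in> A \<longleftrightarrow> (v, u) \<notin> A)"
    using assms(4,5) by blast
  ultimately show ?thesis unfolding tournament_def using assms(1,3) by blast
qed

definition extT :: "(nat \<times> nat) set \<Rightarrow> nat set \<Rightarrow> nat \<Rightarrow> (nat \<times> nat) set" where
  "extT A Q n = A \<union> (\<lambda>v. (n, v)) ` Q \<union> (\<lambda>v. (v, n)) ` ({0..<n} - Q)"

lemma mem_extT: "(u, v) \<in> extT A Q n \<longleftrightarrow> (u, v) \<in> A \<or> (u = n \<and> v \<in> Q) \<or> (v = n \<and> u < n \<and> u \<notin> Q)"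
  unfolding extT_def by auto

lemma extT_tour:
  assumes A: "tournament {0..<n} A" and Q: "Q \<subseteq> {0..<n}"
  shows "tournament {0..<Suc n} (extT A Q n)"
proof (rule tour_intro)
  show "finite {0..<Suc n}" by simp
  show "u \<in> {0..<Suc n} \<and> v \<in> {0..<Suc n}" if "(u, v) \<in> extT A Q n" for u v
    using that tour_sub[OF A] Q unfolding mem_extT by fastforce
  show "(v, v) \<notin> extT A Q n" for v
    using tour_irr[OF A] tour_sub[OF A] Q unfolding mem_extT by fastforce
  show "(u, v) \<in> extT A Q n \<or> (v, u) \<in> extT A Q n" if "u \<in> {0..<Suc n}" "v \<in> {0..<Suc n}" "u \<noteq> v" for u v
    using that tour_tot[OF A, of u v] unfolding mem_extT by (auto simp: less_Suc_eq)
  show "(v, u) \<notin> extT A Q n" if "(u, v) \<in> extT A Q n" for u v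
    using that tour_asym[OF A, of u v] tour_sub[OF A] Q unfolding mem_extT by fastforce
qed

lemma decompT:
  assumes B: "tournament {0..<Suc n} B"
  shows "tournament {0..<n} (B \<inter> ({0..<n} \<times> {0..<n}))"
    and "{v. (n, v) \<in> B} \<subseteq> {0..<n}"
    and "B = extT (B \<inter> ({0..<n} \<times> {0..<n})) {v. (n, v) \<in> B} n"
proof -
  show "tournament {0..<n} (B \<inter> ({0..<n} \<times> {0..<n}))"
    by (rule tour_intro) (use tour_irr[OF B] tour_tot[OF B] tour_asym[OF B] in auto)
  show "{v. (n, v) \<in> B} \<subseteq> {0..<n}"
    using tour_sub[OF B] tour_irr[OF B] by (fastforce simp: less_Suc_eq)
  show "B = extT (B \<inter> ({0..<n} \<times> {0..<n})) {v. (n, v) \<in> B} n"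
  proof (rule set_eqI, clarify)
    fix u v
    show "(u, v) \<in> B \<longleftrightarrow> (u, v) \<in> extT (B \<inter> ({0..<n} \<times> {0..<n})) {v. (n, v) \<in> B} n"
      unfolding mem_extT using tour_sub[OF B, of u v] tour_tot[OF B, of u v] tour_asym[OF B, of v u]
      by (auto simp: less_Suc_eq)
  qed
qed
lemma extT_inj: "inj_on (\<lambda>(A, Q). extT A Q n) ({A. tournament {0..<n} A} \<times> Pow {0..<n})"
proof (rule inj_onI, clarsimp)
  fix A Q A' Q'
  assume h: "tournament {0..<n} A" "Q \<subseteq> {0..<n}" "tournament {0..<n} A'" "Q' \<subseteq> {0..<n}"
    "extT A Q n = extT A' Q' n"
  have "A = extT A Q n \<inter> ({0..<n} \<times> {0..<n})" using tour_sub[OF h(1)] h(2) unfolding extT_def by fastforce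
  moreover have "A' = extT A' Q' n \<inter> ({0..<n} \<times> {0..<n})" using tour_sub[OF h(3)] h(4) unfolding extT_def by fastforce
  ultimately have "A = A'" using h(5) by simp
  moreover have "Q = {v. (n, v) \<in> extT A Q n}" using tour_sub[OF h(1)] h(2) unfolding mem_extT by fastforce
  moreover have "Q' = {v. (n, v) \<in> extT A' Q' n}" using tour_sub[OF h(3)] h(4) unfolding mem_extT by fastforce
  ultimately show "A = A' \<and> Q = Q'" using h(5) by simp
qed

lemma card_tour_Suc: "card {A. tournament {0..<Suc n} A} = card {A. tournament {0..<n} A} * 2^n"
proof -
  have "{A. tournament {0..<Suc n} A} = (\<lambda>(A, Q). extT A Q n) ` ({A. tournament {0..<n} A} \<times> Pow {0..<n})"
  proof
    show "{A. tournament {0..<Suc n} A} \<subseteq> (\<lambda>(A, Q). extT A Q n) ` ({A. tournament {0..<n} A} \<times> Pow {0..<n})"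
    proof
      fix B assume "B \<in> {A. tournament {0..<Suc n} A}"
      then have B: "tournament {0..<Suc n} B" by simp
      show "B \<in> (\<lambda>(A, Q). extT A Q n) ` ({A. tournament {0..<n} A} \<times> Pow {0..<n})"
        using decompT[OF B] by (intro image_eqI[where x="(B \<inter> ({0..<n} \<times> {0..<n}), {v. (n, v) \<in> B})"]) auto
    qed
    show "(\<lambda>(A, Q). extT A Q n) ` ({A. tournament {0..<n} A} \<times> Pow {0..<n}) \<subseteq> {A. tournament {0..<Suc n} A}"
      using extT_tour by auto
  qed
  then have "card {A. tournament {0..<Suc n} A} = card ({A. tournament {0..<n} A} \<times> Pow {0..<n})"
    using card_image[OF extT_inj] by simp
  then show ?thesis by (simp add: card_cartesian_product card_Pow)
qed

lemma tour_zero: "tournament {0..<0::nat} A \<Longrightarrow> A = {}"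
proof (rule equals0I)
  fix x assume h: "tournament {0..<0::nat} A" and x: "x \<in> A"
  obtain a b where "x = (a, b)" by (cases x)
  then have "a \<in> {0..<0::nat}" using tour_sub[OF h, of a b] x by simp
  then show False by simp
qed

lemma card_tour: "real (card {A. tournament {0..<n} A}) = (\<Prod>m<n. 2^m)"
proof (induction n)
  case 0
  have e: "A = {}" if h: "tournament {0..<0::nat} A" for A
  proof (rule equals0I)
    fix x assume x: "x \<in> A"
    obtain a b where "x = (a, b)" by (cases x)
    then have "a \<in> {0..<0::nat}" using tour_sub[OF h, of a b] x by simp
    then show False by simp
  qed
  have t: "tournament {0..<0::nat} {}" by (rule tour_intro) auto
  have "{A. tournament {0..<0::nat} A} = {{}}" using e t by blast
  then show ?case by simp
next
  case (Suc n) then show ?case by (simp add: card_tour_Suc)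
qed

lemma outdeg_extT_lt:
  assumes "tournament {0..<n} A" "Q \<subseteq> {0..<n}" "v < n"
  shows "outdeg (extT A Q n) v = outdeg A v + (if v \<in> Q then 0 else 1)"
proof -
  have fin: "finite {w. (v, w) \<in> A}" 
    by (rule finite_subset[of _ "{0..<n}"]) (use tour_sub[OF assms(1)] in auto)
  have nn: "n \<notin> {w. (v, w) \<in> A}" using tour_sub[OF assms(1)] by auto
  have "{w. (v, w) \<in> extT A Q n} = {w. (v, w) \<in> A} \<union> (if v \<in> Q then {} else {n})"
    using assms(3) unfolding mem_extT by auto
  then show ?thesis using fin nn unfolding outdeg_def by auto
qed

lemma outdeg_extT_n:
  assumes "tournament {0..<n} A" "Q \<subseteq> {0..<n}"
  shows "outdeg (extT A Q n) n = card Q"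
proof -
  have "{w. (n, w) \<in> extT A Q n} = Q"
    using tour_sub[OF assms(1)] unfolding mem_extT by auto
  then show ?thesis unfolding outdeg_def by simp
qed

definition Sw :: "nat \<Rightarrow> (nat \<Rightarrow> nat set) \<Rightarrow> (nat \<times> nat) set set" where
  "Sw n W = {A. tournament {0..<n} A \<and> (\<forall>v<n. outdeg A v \<in> W v)}"

lemma finite_tour: "finite {A. tournament {0..<(n::nat)} A}"
proof -
  have "{A. tournament {0..<n} A} \<subseteq> Pow ({0..<n} \<times> {0..<n})" using tour_sub by fastforce
  moreover have "finite ({0..<n} \<times> {0..<n::nat})" by (rule finite_cartesian_product) simp_all
  ultimately show ?thesis using finite_subset by blast
qed

lemma count_Sw:
  assumes "\<forall>v. finite (W v) \<and> card (W v) \<le> c"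
  shows "real (card (Sw n W)) \<le> (\<Prod>m<n. real c * 2^m / sqrt (real m + 1))"
  using assms
proof (induction n arbitrary: W)
  case 0
  have "Sw 0 W \<subseteq> {{}}" unfolding Sw_def using tour_zero by auto
  then have "card (Sw 0 W) \<le> card {{}::(nat\<times>nat) set}" by (intro card_mono) simp_all
  then have "card (Sw 0 W) \<le> 1" by simp
  then show ?case by simp
next
  case (Suc n)
  define W' where "W' Q v = {d. d + (if v \<in> Q then 0 else 1) \<in> W v}" for Q v
  define QQ where "QQ = {Q. Q \<subseteq> {0..<n} \<and> card Q \<in> W n}"
  define P where "P = (\<Prod>m<n. real c * 2^m / sqrt (real m + 1))"
  have W'ok: "\<forall>v. finite (W' Q v) \<and> card (W' Q v) \<le> c" for Q
  proof
    fix v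
    define e where "e = (if v \<in> Q then 0 else 1::nat)"
    have inj: "inj_on (\<lambda>d. d + e) (W' Q v)" by (auto simp: inj_on_def)
    have sub: "(\<lambda>d. d + e) ` (W' Q v) \<subseteq> W v" unfolding W'_def e_def by auto
    have fin: "finite (W' Q v)"
      using finite_imageD[OF finite_subset[OF sub] inj] Suc.prems by auto
    have "card (W' Q v) \<le> card (W v)"
      using card_inj_on_le[OF inj sub] Suc.prems by auto
    then show "finite (W' Q v) \<and> card (W' Q v) \<le> c" using fin Suc.prems by (meson le_trans)
  qed
  have IH: "real (card (Sw n (W' Q))) \<le> P" for Q using Suc.IH[OF W'ok] P_def by simp
  have sub: "Sw (Suc n) W \<subseteq> (\<lambda>(A, Q). extT A Q n) ` (\<Union>Q\<in>QQ. Sw n (W' Q) \<times> {Q})"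
  proof
    fix B assume "B \<in> Sw (Suc n) W"
    then have B: "tournament {0..<Suc n} B" and deg: "\<forall>v<Suc n. outdeg B v \<in> W v"
      unfolding Sw_def by auto
    define A where "A = B \<inter> ({0..<n} \<times> {0..<n})"
    define Q where "Q = {v. (n, v) \<in> B}"
    have At: "tournament {0..<n} A" and Qs: "Q \<subseteq> {0..<n}" and Be: "B = extT A Q n"
      using decompT[OF B] A_def Q_def by auto
    have "card Q \<in> W n" using deg outdeg_extT_n[OF At Qs] Be by auto
    then have "Q \<in> QQ" using Qs QQ_def by auto
    moreover have "A \<in> Sw n (W' Q)"
    proof -
      have "outdeg A v + (if v \<in> Q then 0 else 1) \<in> W v" if "v < n" for v
        using deg outdeg_extT_lt[OF At Qs that] Be that by (metis less_SucI)
      then show ?thesis unfolding Sw_def W'_def using At by auto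
    qed
    ultimately show "B \<in> (\<lambda>(A, Q). extT A Q n) ` (\<Union>Q\<in>QQ. Sw n (W' Q) \<times> {Q})"
      using Be by force
  qed
  have finQQ: "finite QQ" unfolding QQ_def by auto
  have "card (Sw (Suc n) W) \<le> card (\<Union>Q\<in>QQ. Sw n (W' Q) \<times> {Q})"
  proof -
    have fS: "finite (Sw n (W' Q))" for Q
      by (rule finite_subset[OF _ finite_tour[of n]]) (auto simp: Sw_def)
    have finU: "finite (\<Union>Q\<in>QQ. Sw n (W' Q) \<times> {Q})"
      using finQQ fS by (intro finite_UN_I finite_cartesian_product) auto
    have c1: "card (Sw (Suc n) W) \<le> card ((\<lambda>(A, Q). extT A Q n) ` (\<Union>Q\<in>QQ. Sw n (W' Q) \<times> {Q}))"
      by (rule card_mono[OF finite_imageI[OF finU] sub])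
    have c2: "card ((\<lambda>(A, Q). extT A Q n) ` (\<Union>Q\<in>QQ. Sw n (W' Q) \<times> {Q})) \<le> card (\<Union>Q\<in>QQ. Sw n (W' Q) \<times> {Q})"
      by (rule card_image_le[OF finU])
    show ?thesis using c1 c2 by linarith
  qed
  also have "\<dots> \<le> (\<Sum>Q\<in>QQ. card (Sw n (W' Q) \<times> {Q}))" by (rule card_UN_le[OF finQQ])
  also have "\<dots> = (\<Sum>Q\<in>QQ. card (Sw n (W' Q)))" by (simp add: card_cartesian_product)
  finally have "real (card (Sw (Suc n) W)) \<le> (\<Sum>Q\<in>QQ. real (card (Sw n (W' Q))))"
    by (simp only: of_nat_sum[symmetric] of_nat_le_iff)
  also have "\<dots> \<le> (\<Sum>Q\<in>QQ. P)" by (intro sum_mono IH)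
  also have "\<dots> = real (card QQ) * P" by simp
  also have "real (card QQ) \<le> real c * 2^n / sqrt (real n + 1)"
  proof -
    have "QQ = (\<Union>d\<in>W n. {Q. Q \<subseteq> {0..<n} \<and> card Q = d})" unfolding QQ_def by auto
    then have "card QQ \<le> (\<Sum>d\<in>W n. card {Q. Q \<subseteq> {0..<n} \<and> card Q = d})"
      using card_UN_le[of "W n" "\<lambda>d. {Q. Q \<subseteq> {0..<n} \<and> card Q = d}"] Suc.prems by simp
    also have "\<dots> = (\<Sum>d\<in>W n. n choose d)" using n_subsets[of "{0..<n}"] by simp
    finally have "real (card QQ) \<le> (\<Sum>d\<in>W n. real (n choose d))"
      by (simp only: of_nat_sum[symmetric] of_nat_le_iff)
    also have "\<dots> \<le> (\<Sum>d\<in>W n. 2^n / sqrt (real n + 1))"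
      by (intro sum_mono) (use binom_real_bound in \<open>simp add: add.commute\<close>)
    also have "\<dots> = real (card (W n)) * (2^n / sqrt (real n + 1))" by simp
    also have "\<dots> \<le> real c * (2^n / sqrt (real n + 1))"
      using Suc.prems by (intro mult_right_mono) auto
    finally show ?thesis by simp
  qed
  then have "real (card QQ) * P \<le> real c * 2^n / sqrt (real n + 1) * P"
    by (intro mult_right_mono) (auto simp: P_def intro!: prod_nonneg)
  finally show ?case by (simp add: P_def algebra_simps)
qed



lemma mem_invert: "(x, y) \<in> invert A X \<longleftrightarrow> (if x \<in> X \<and> y \<in> X then (y, x) \<in> A else (x, y) \<in> A)"
  unfolding invert_def by auto

lemma invert_invol: "invert (invert A X) X = A"
  by (rule set_eqI, clarify) (simp add: mem_invert)

lemma invert_empty: "invert A {} = A"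
  by (rule set_eqI, clarify) (simp add: mem_invert)

lemma invert_tour: "tournament V A \<Longrightarrow> tournament V (invert A X)"
  apply (rule tour_intro)
      apply (erule tour_fin)
  subgoal for u v using tour_sub[of V A u v] tour_sub[of V A v u] by (auto simp: mem_invert split: if_splits)
  subgoal for v using tour_irr[of V A v] by (auto simp: mem_invert)
  subgoal for u v using tour_tot[of V A u v] tour_tot[of V A v u] by (auto simp: mem_invert)
  subgoal for u v using tour_asym[of V A u v] tour_asym[of V A v u] by (auto simp: mem_invert split: if_splits)
  done

lemma foldl_invert_tour: "tournament V A \<Longrightarrow> tournament V (foldl invert A Xs)"
  by (induction Xs arbitrary: A) (auto intro: invert_tour)

lemma foldl_invert_rev: "foldl invert (foldl invert A Xs) (rev Xs) = A"
  by (induction Xs arbitrary: A) (auto simp: invert_invol)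

lemma foldl_invert_empties: "foldl invert A (replicate m {}) = A"
  by (induction m) (auto simp: invert_empty)

definition indeg :: "(nat \<times> nat) set \<Rightarrow> nat \<Rightarrow> nat" where
  "indeg A v = card {u. (u, v) \<in> A}"

lemma out_in_sum:
  assumes A: "tournament V A" and v: "v \<in> V"
  shows "outdeg A v + indeg A v + 1 = card V"
proof -
  have fV: "finite V" using tour_fin[OF A] .
  have d: "{w. (v, w) \<in> A} \<inter> {u. (u, v) \<in> A} = {}" using tour_asym[OF A] by auto
  have u: "{w. (v, w) \<in> A} \<union> {u. (u, v) \<in> A} = V - {v}"
    using tour_sub[OF A] tour_tot[OF A] tour_irr[OF A] v by blast
  have f1: "finite {w. (v, w) \<in> A}" by (rule finite_subset[OF _ fV]) (use tour_sub[OF A] in auto)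
  have f2: "finite {u. (u, v) \<in> A}" by (rule finite_subset[OF _ fV]) (use tour_sub[OF A] in auto)
  have "card (V - {v}) = outdeg A v + indeg A v"
    unfolding outdeg_def indeg_def using card_Un_disjoint[OF f1 f2 d] u by simp
  moreover have "card (V - {v}) + 1 = card V"
  proof -
    have "card V > 0" using fV v card_gt_0_iff by blast
    then show ?thesis using card_Diff_singleton[OF v] by simp
  qed
  ultimately show ?thesis by simp
qed

lemma strong_window:
  assumes A: "tournament V A" and s: "arc_strong k V A" and v: "v \<in> V" and V2: "card V \<ge> 2"
  shows "k \<le> outdeg A v \<and> k \<le> indeg A v"
proof -
  have fV: "finite V" using tour_fin[OF A] .
  have ne: "{v} \<noteq> V"
  proof
    assume "{v} = V"
    then have "card V = 1" by auto
    with V2 show False by simp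
  qed
  have ne2: "V - {v} \<noteq> {}" using ne v by blast
  have ne3: "V - {v} \<noteq> V" using v by blast
  have cut: "card {(u, w) \<in> A. u \<in> V1 \<and> w \<in> V - V1} \<ge> k" if "V1 \<subseteq> V" "V1 \<noteq> {}" "V1 \<noteq> V" for V1
    using s that unfolding arc_strong_def by blast
  have "card {(u, w) \<in> A. u \<in> {v} \<and> w \<in> V - {v}} \<ge> k"
    by (rule cut) (use ne v in auto)
  moreover have "{(u, w) \<in> A. u \<in> {v} \<and> w \<in> V - {v}} = (\<lambda>w. (v, w)) ` {w. (v, w) \<in> A}"
    using tour_sub[OF A] tour_irr[OF A] by auto
  moreover have "card ((\<lambda>w. (v, w)) ` {w. (v, w) \<in> A}) = outdeg A v"
    unfolding outdeg_def by (rule card_image) (auto simp: inj_on_def)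
  ultimately have o: "k \<le> outdeg A v" by simp
  have "card {(u, w) \<in> A. u \<in> V - {v} \<and> w \<in> V - (V - {v})} \<ge> k"
    by (rule cut[OF _ ne2 ne3]) auto
  moreover have "{(u, w) \<in> A. u \<in> V - {v} \<and> w \<in> V - (V - {v})} = (\<lambda>u. (u, v)) ` {u. (u, v) \<in> A}"
    using tour_sub[OF A] tour_irr[OF A] v by auto
  moreover have "card ((\<lambda>u. (u, v)) ` {u. (u, v) \<in> A}) = indeg A v"
    unfolding indeg_def by (rule card_image) (auto simp: inj_on_def)
  ultimately have i: "k \<le> indeg A v" by simp
  show ?thesis using o i by simp
qed




lemma card_conv: "card ((\<lambda>(x, y). (y, x)) ` (R :: ('a \<times> 'a) set)) = card R"
  by (rule card_image) (auto simp: inj_on_def)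

lemma tour_inner_card:
  assumes A: "tournament V A" and V1: "V1 \<subseteq> V"
  shows "2 * card (A \<inter> (V1 \<times> V1)) + card V1 = card V1 * card V1"
proof -
  have fV1: "finite V1" using tour_fin[OF A] V1 finite_subset by blast
  let ?I = "A \<inter> (V1 \<times> V1)"
  let ?C = "(\<lambda>(x, y). (y, x)) ` ?I"
  let ?D = "(\<lambda>x. (x, x)) ` V1"
  have dj: "?I \<inter> ?C = {}" using tour_asym[OF A] by auto
  have dj2: "(?I \<union> ?C) \<inter> ?D = {}" using tour_irr[OF A] by auto
  have un: "?I \<union> ?C \<union> ?D = V1 \<times> V1"
  proof
    show "?I \<union> ?C \<union> ?D \<subseteq> V1 \<times> V1" by auto
    show "V1 \<times> V1 \<subseteq> ?I \<union> ?C \<union> ?D"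
    proof (rule subsetI)
      fix p assume "p \<in> V1 \<times> V1"
      then obtain x y where p: "p = (x, y)" and xy: "x \<in> V1" "y \<in> V1" by blast
      have "(x, y) \<in> ?I \<union> ?C \<union> ?D"
      proof (cases "x = y")
        case True
        have "(x, y) \<in> ?D" using True xy by auto
        then show ?thesis by auto
      next
        case False
        then have "(x, y) \<in> A \<or> (y, x) \<in> A" using tour_tot[OF A, of x y] xy V1 by auto
        then show ?thesis
        proof
          assume "(x, y) \<in> A" then show ?thesis using xy by auto
        next
          assume h: "(y, x) \<in> A"
          have "(x, y) = (\<lambda>(x, y). (y, x)) (y, x)" by simp
          moreover have "(y, x) \<in> ?I" using h xy by auto
          ultimately have "(x, y) \<in> ?C" by (rule image_eqI)
          then show ?thesis by auto
        qed
      qed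
      then show "p \<in> ?I \<union> ?C \<union> ?D" using p by simp
    qed
  qed
  have fI: "finite ?I" using fV1 by (simp add: finite_cartesian_product finite_Int)
  have fC: "finite ?C" using fI by simp
  have fD: "finite ?D" using fV1 by simp
  have "card (V1 \<times> V1) = card (?I \<union> ?C) + card ?D"
    using card_Un_disjoint[OF _ fD dj2] fI fC un by simp
  also have "card (?I \<union> ?C) = card ?I + card ?C" using card_Un_disjoint[OF fI fC dj] .
  also have "card ?C = card ?I" by (rule card_conv)
  also have "card ?D = card V1" by (rule card_image) (auto simp: inj_on_def)
  finally show ?thesis by (simp add: card_cartesian_product)
qed

lemma tour_outsum:
  assumes A: "tournament V A" and V1: "V1 \<subseteq> V"
  shows "card (A \<inter> (V1 \<times> V)) = (\<Sum>u\<in>V1. outdeg A u)"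
proof -
  have fV: "finite V" using tour_fin[OF A] .
  have fV1: "finite V1" using fV V1 finite_subset by blast
  have "A \<inter> (V1 \<times> V) = Sigma V1 (\<lambda>u. {w. (u, w) \<in> A})" using tour_sub[OF A] by auto
  moreover have "finite {w. (u, w) \<in> A}" for u
    by (rule finite_subset[OF _ fV]) (use tour_sub[OF A] in auto)
  ultimately show ?thesis using fV1 by (simp add: outdeg_def)
qed

lemma arc_strong_from_deg:
  assumes A: "tournament V A" and deg: "\<forall>v\<in>V. \<delta> \<le> outdeg A v \<and> \<delta> \<le> indeg A v"
    and size: "card V \<le> 2 * \<delta> + 2" and kd: "k \<le> \<delta>"
  shows "arc_strong k V A"
  unfolding arc_strong_def
proof (intro allI impI, elim conjE)
  fix V1 assume V1: "V1 \<subseteq> V" and ne: "V1 \<noteq> {}" and nV: "V1 \<noteq> V"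
  have fV: "finite V" using tour_fin[OF A] .
  have fV1: "finite V1" using fV V1 finite_subset by blast
  define s where "s = card V1"
  have s1: "s \<ge> 1" using ne fV1 s_def by (simp add: Suc_leI card_gt_0_iff)
  let ?E = "{(u, w) \<in> A. u \<in> V1 \<and> w \<in> V - V1}"
  show "k \<le> card ?E"
  proof (cases "s \<le> 2 * \<delta>")
    case True
    have eq: "?E = (A \<inter> (V1 \<times> V)) - (A \<inter> (V1 \<times> V1))" using tour_sub[OF A] by auto
    have fAV: "finite (A \<inter> (V1 \<times> V))" using fV1 fV by (simp add: finite_cartesian_product finite_Int)
    have cE: "card ?E = card (A \<inter> (V1 \<times> V)) - card (A \<inter> (V1 \<times> V1))"
      unfolding eq using V1 by (intro card_Diff_subset) (auto intro: finite_subset[OF _ fAV])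
    have le: "card (A \<inter> (V1 \<times> V1)) \<le> card (A \<inter> (V1 \<times> V))"
      using V1 by (intro card_mono[OF fAV]) auto
    have sum: "card (A \<inter> (V1 \<times> V)) \<ge> s * \<delta>"
    proof -
      have "(\<Sum>u\<in>V1. \<delta>) \<le> (\<Sum>u\<in>V1. outdeg A u)" using deg V1 by (intro sum_mono) auto
      then show ?thesis using tour_outsum[OF A V1] s_def by simp
    qed
    have inner: "2 * card (A \<inter> (V1 \<times> V1)) + s = s * s" using tour_inner_card[OF A V1] s_def by simp
    have key: "int s * (2 * int \<delta> + 1 - int s) \<ge> 2 * int \<delta>"
    proof -
      have "(int s - 1) * (2 * int \<delta> - int s) \<ge> 0" using True s1 by (intro mult_nonneg_nonneg) auto
      then show ?thesis by (simp add: algebra_simps)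
    qed
    have "2 * int (card ?E) = 2 * int (card (A \<inter> (V1 \<times> V))) - 2 * int (card (A \<inter> (V1 \<times> V1)))"
      using cE le by (simp add: of_nat_diff)
    also have "\<dots> = 2 * int (card (A \<inter> (V1 \<times> V))) - (int s * int s - int s)"
      using arg_cong[OF inner, of int] by simp
    also have "\<dots> \<ge> 2 * (int s * int \<delta>) - (int s * int s - int s)"
      using sum by (simp add: of_nat_mult[symmetric] del: of_nat_mult)
    finally have "2 * int (card ?E) \<ge> 2 * int \<delta>" using key by (simp add: algebra_simps)
    then show ?thesis using kd by simp
  next
    case False
    have "card (V - V1) = card V - s" using card_Diff_subset[OF fV1 V1] s_def by simp
    then have c1: "card (V - V1) \<le> 1" using False size by simp
    have "V - V1 \<noteq> {}" using V1 nV by blast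
    then have "card (V - V1) \<noteq> 0" using fV by simp
    then have "card (V - V1) = 1" using c1 by simp
    then obtain w where Vw: "V - V1 = {w}" by (rule card_1_singletonE)
    then have w: "w \<in> V - V1" by simp
    have "?E = (\<lambda>u. (u, w)) ` {u. (u, w) \<in> A}"
    proof
      show "?E \<subseteq> (\<lambda>u. (u, w)) ` {u. (u, w) \<in> A}" using Vw by auto
      show "(\<lambda>u. (u, w)) ` {u. (u, w) \<in> A} \<subseteq> ?E"
      proof (rule subsetI)
        fix p assume "p \<in> (\<lambda>u. (u, w)) ` {u. (u, w) \<in> A}"
        then obtain u where p: "p = (u, w)" and u: "(u, w) \<in> A" by blast
        have "u \<in> V" "u \<noteq> w" using tour_sub[OF A u] tour_irr[OF A] u by auto
        then have "u \<in> V1" using Vw by blast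
        then show "p \<in> ?E" using u Vw p by auto
      qed
    qed
    moreover have "card ((\<lambda>u. (u, w)) ` {u. (u, w) \<in> A}) = indeg A w"
      unfolding indeg_def by (rule card_image) (auto simp: inj_on_def)
    ultimately have "card ?E = indeg A w" by simp
    then show ?thesis using deg w kd by fastforce
  qed
qed




lemma cnt_below: "card {j. j < i \<and> even (i - j)} = i div 2 \<and> card {j. j < i \<and> odd (i - j)} = (i + 1) div 2"
proof (induction i)
  case 0 then show ?case by simp
next
  case (Suc i)
  have e1: "{j. j < Suc i \<and> even (Suc i - j)} = {j. j < i \<and> odd (i - j)}"
    by (auto simp: less_Suc_eq Suc_diff_le)
  have e2: "{j. j < Suc i \<and> odd (Suc i - j)} = insert i {j. j < i \<and> even (i - j)}"
    by (auto simp: less_Suc_eq Suc_diff_le)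
  have "card (insert i {j. j < i \<and> even (i - j)}) = Suc (card {j. j < i \<and> even (i - j)})"
    by (rule card_insert_disjoint) auto
  then show ?case using Suc.IH e1 e2 by simp
qed

lemma cnt_above: "card {j. i < j \<and> j < n \<and> odd (j - i)} = (n - i) div 2 \<and>
                  card {j. i < j \<and> j < n \<and> even (j - i)} = (n - i - 1) div 2"
proof (induction n)
  case 0 then show ?case by simp
next
  case (Suc n)
  show ?case
  proof (cases "i < n")
    case False
    then have "{j. i < j \<and> j < Suc n \<and> odd (j - i)} = {}" "{j. i < j \<and> j < Suc n \<and> even (j - i)} = {}"
      by auto
    then show ?thesis using False by simp
  next
    case True
    have f1: "finite {j. i < j \<and> j < n \<and> odd (j - i)}" by simp
    have f2: "finite {j. i < j \<and> j < n \<and> even (j - i)}" by simp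
    have e1: "{j. i < j \<and> j < Suc n \<and> odd (j - i)} = {j. i < j \<and> j < n \<and> odd (j - i)} \<union> (if odd (n - i) then {n} else {})"
      using True by (auto simp: less_Suc_eq)
    have e2: "{j. i < j \<and> j < Suc n \<and> even (j - i)} = {j. i < j \<and> j < n \<and> even (j - i)} \<union> (if even (n - i) then {n} else {})"
      using True by (auto simp: less_Suc_eq)
    have c1: "card {j. i < j \<and> j < Suc n \<and> odd (j - i)} = (n - i) div 2 + (if odd (n - i) then 1 else 0)"
      unfolding e1 using Suc.IH f1 by (auto simp: card_insert_if)
    have c2: "card {j. i < j \<and> j < Suc n \<and> even (j - i)} = (n - i - 1) div 2 + (if even (n - i) then 1 else 0)"
      unfolding e2 using Suc.IH f2 by (auto simp: card_insert_if)
    have a1: "(n - i) div 2 + (if odd (n - i) then 1 else 0) = (Suc n - i) div 2"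
      using True by (cases "even (n - i)") (auto simp: Suc_diff_le elim!: evenE oddE)
    have a2: "(n - i - 1) div 2 + (if even (n - i) then 1 else 0) = (Suc n - i - 1) div 2"
    proof -
      define m where "m = n - i"
      have m1: "m \<ge> 1" using True m_def by simp
      have "Suc n - i - 1 = m" using True m_def by simp
      moreover have "(m - 1) div 2 + (if even m then 1 else 0) = m div 2" using m1 by presburger
      ultimately show ?thesis using m_def by simp
    qed
    show ?thesis using c1 c2 a1 a2 by simp
  qed
qed

definition T0 :: "nat \<Rightarrow> (nat \<times> nat) set" where
  "T0 n = {(i, j). i < n \<and> j < n \<and> ((i < j \<and> odd (j - i)) \<or> (j < i \<and> even (i - j)))}"

lemma T0_tour: "tournament {0..<n} (T0 n)"
proof (rule tour_intro)
  show "finite {0..<n}" by simp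
  show "u \<in> {0..<n} \<and> v \<in> {0..<n}" if "(u, v) \<in> T0 n" for u v using that by (auto simp: T0_def)
  show "(v, v) \<notin> T0 n" for v by (auto simp: T0_def)
  show "(u, v) \<in> T0 n \<or> (v, u) \<in> T0 n" if "u \<in> {0..<n}" "v \<in> {0..<n}" "u \<noteq> v" for u v
    using that by (auto simp: T0_def)
  show "(v, u) \<notin> T0 n" if "(u, v) \<in> T0 n" for u v using that by (auto simp: T0_def)
qed

lemma T0_out: "i < n \<Longrightarrow> outdeg (T0 n) i = i div 2 + (n - i) div 2"
proof -
  assume i: "i < n"
  have "{w. (i, w) \<in> T0 n} = {j. j < i \<and> even (i - j)} \<union> {j. i < j \<and> j < n \<and> odd (j - i)}"
    using i by (auto simp: T0_def)
  moreover have "card ({j. j < i \<and> even (i - j)} \<union> {j. i < j \<and> j < n \<and> odd (j - i)}) =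
      card {j. j < i \<and> even (i - j)} + card {j. i < j \<and> j < n \<and> odd (j - i)}"
    by (rule card_Un_disjoint) auto
  ultimately show ?thesis using cnt_below[of i] cnt_above[of i n] by (simp add: outdeg_def)
qed

lemma T0_in: "i < n \<Longrightarrow> indeg (T0 n) i = (i + 1) div 2 + (n - i - 1) div 2"
proof -
  assume i: "i < n"
  have "{u. (u, i) \<in> T0 n} = {j. j < i \<and> odd (i - j)} \<union> {j. i < j \<and> j < n \<and> even (j - i)}"
    using i by (auto simp: T0_def)
  moreover have "card ({j. j < i \<and> odd (i - j)} \<union> {j. i < j \<and> j < n \<and> even (j - i)}) =
      card {j. j < i \<and> odd (i - j)} + card {j. i < j \<and> j < n \<and> even (j - i)}"
    by (rule card_Un_disjoint) auto
  ultimately show ?thesis using cnt_below[of i] cnt_above[of i n] by (simp add: indeg_def)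
qed

lemma T0_strong:
  assumes "n \<ge> 2 * k + 1"
  shows "arc_strong k {0..<n} (T0 n)"
proof -
  have h1: "\<forall>v\<in>{0..<n}. (n - 1) div 2 \<le> outdeg (T0 n) v \<and> (n - 1) div 2 \<le> indeg (T0 n) v"
  proof
    fix v assume "v \<in> {0..<n}"
    then have v: "v < n" by simp
    have "(n - 1) div 2 \<le> v div 2 + (n - v) div 2" using v by presburger
    moreover have "(n - 1) div 2 \<le> (v + 1) div 2 + (n - v - 1) div 2" using v by presburger
    ultimately show "(n - 1) div 2 \<le> outdeg (T0 n) v \<and> (n - 1) div 2 \<le> indeg (T0 n) v"
      using T0_out[OF v] T0_in[OF v] by simp
  qed
  have h2: "card {0..<n} \<le> 2 * ((n - 1) div 2) + 2" by simp
  have h3: "k \<le> (n - 1) div 2" using assms by simp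
  show ?thesis by (rule arc_strong_from_deg[OF T0_tour h1 h2 h3])
qed




definition flipP :: "(nat \<times> nat) set \<Rightarrow> (nat \<times> nat) set \<Rightarrow> (nat \<times> nat) set" where
  "flipP A P = {(x, y). if (x, y) \<in> P \<or> (y, x) \<in> P then (y, x) \<in> A else (x, y) \<in> A}"

lemma mem_flipP: "(x, y) \<in> flipP A P \<longleftrightarrow> (if (x, y) \<in> P \<or> (y, x) \<in> P then (y, x) \<in> A else (x, y) \<in> A)"
  unfolding flipP_def by simp

lemma flipP_reach:
  assumes "finite P" "\<forall>p\<in>P. fst p < snd p \<and> fst p \<in> V \<and> snd p \<in> V"
  shows "\<exists>Xs. set Xs \<subseteq> Pow V \<and> foldl invert A Xs = flipP A P"
  using assms
proof (induction P rule: finite_induct)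
  case empty
  have "flipP A {} = A" by (rule set_eqI, clarify) (simp add: mem_flipP)
  then show ?case by (intro exI[of _ "[]"]) simp
next
  case (insert p P)
  obtain u v where p: "p = (u, v)" by (cases p)
  have uv: "u < v" "u \<in> V" "v \<in> V" using insert.prems p by auto
  obtain Xs where Xs: "set Xs \<subseteq> Pow V" "foldl invert A Xs = flipP A P" using insert by auto
  have np: "(u, v) \<notin> P" using insert.hyps p by simp
  have nq: "(v, u) \<notin> P" using insert.prems uv by force
  have "invert (flipP A P) {u, v} = flipP A (insert p P)"
  proof (rule set_eqI, clarify)
    fix x y
    show "(x, y) \<in> invert (flipP A P) {u, v} \<longleftrightarrow> (x, y) \<in> flipP A (insert p P)"
    proof (cases "x \<in> {u, v} \<and> y \<in> {u, v}")
      case True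
      then show ?thesis using np nq uv unfolding mem_invert mem_flipP p by auto
    next
      case False
      then have "(x, y) \<noteq> (u, v)" "(y, x) \<noteq> (u, v)" by auto
      then show ?thesis using False unfolding mem_invert mem_flipP p by auto
    qed
  qed
  then have "foldl invert A (Xs @ [{u, v}]) = flipP A (insert p P)" using Xs by simp
  moreover have "set (Xs @ [{u, v}]) \<subseteq> Pow V" using Xs uv by auto
  ultimately show ?case by blast
qed

lemma reach_any:
  fixes n :: nat
  assumes T: "tournament {0..<n} T" and T': "tournament {0..<n} T'"
  shows "\<exists>Xs. set Xs \<subseteq> Pow {0..<n} \<and> foldl invert T Xs = T'"
proof -
  define P where "P = {(u, v). u < v \<and> v < n \<and> ((u, v) \<in> T \<longleftrightarrow> (u, v) \<notin> T')}"
  have fP: "finite P"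
  proof (rule finite_subset[of _ "{0..<n} \<times> {0..<n}"])
    show "P \<subseteq> {0..<n} \<times> {0..<n}" by (auto simp: P_def)
    show "finite ({0..<n} \<times> {0..<n})" by (rule finite_cartesian_product) simp_all
  qed
  have Pp: "\<forall>p\<in>P. fst p < snd p \<and> fst p \<in> {0..<n} \<and> snd p \<in> {0..<n}" by (auto simp: P_def)
  have "flipP T P = T'"
  proof (rule set_eqI, clarify)
    fix x y
    show "(x, y) \<in> flipP T P \<longleftrightarrow> (x, y) \<in> T'"
    proof (cases "x < n \<and> y < n")
      case False
      then have "(x, y) \<notin> T" "(x, y) \<notin> T'" "(x, y) \<notin> P" "(y, x) \<notin> P"
        using tour_sub[OF T, of x y] tour_sub[OF T', of x y] by (auto simp: P_def)
      then show ?thesis unfolding mem_flipP by simp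
    next
      case True
      show ?thesis
      proof (cases "x = y")
        case True
        then show ?thesis using tour_irr[OF T] tour_irr[OF T'] unfolding mem_flipP by (auto simp: P_def)
      next
        case False
        have t1: "(x, y) \<in> T \<longleftrightarrow> (y, x) \<notin> T"
          using tour_tot[OF T, of x y] tour_asym[OF T, of x y] True False by auto
        have t2: "(x, y) \<in> T' \<longleftrightarrow> (y, x) \<notin> T'"
          using tour_tot[OF T', of x y] tour_asym[OF T', of x y] True False by auto
        show ?thesis
        proof (cases "x < y")
          case True
          then show ?thesis using t1 t2 \<open>x < n \<and> y < n\<close> unfolding mem_flipP by (auto simp: P_def)
        next
          case False
          then have "y < x" using \<open>x \<noteq> y\<close> by simp
          then show ?thesis using t1 t2 \<open>x < n \<and> y < n\<close> unfolding mem_flipP by (auto simp: P_def)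
        qed
      qed
    qed
  qed
  then show ?thesis using flipP_reach[OF fP Pp, of T] by auto
qed




lemma main_count:
  assumes k1: "k \<ge> 1" and c1: "c \<ge> 1" and n: "n = 2 * k + c"
    and tb: "real c * 2^t \<le> sqrt (real n) / 2"
  shows "\<exists>T. tournament {0..<n} T \<and>
           \<not> (\<exists>Xs. length Xs = t \<and> set Xs \<subseteq> Pow {0..<n} \<and> arc_strong k {0..<n} (foldl invert T Xs))"
proof (rule ccontr)
  assume contra: "\<not> ?thesis"
  define V where "V = {0..<n}"
  define Tn where "Tn = {T. tournament V T}"
  define S where "S = Sw n (\<lambda>_. {k..<k + c})"
  define L where "L = {Xs. set Xs \<subseteq> Pow V \<and> length Xs = t}"
  have n2: "card V \<ge> 2" using k1 c1 n V_def by simp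
  have sub: "Tn \<subseteq> (\<lambda>(T', Xs). foldl invert T' (rev Xs)) ` (S \<times> L)"
  proof
    fix T assume "T \<in> Tn"
    then have T: "tournament V T" by (simp add: Tn_def)
    then obtain Xs where Xs: "length Xs = t" "set Xs \<subseteq> Pow V" "arc_strong k V (foldl invert T Xs)"
      using contra V_def by blast
    define T' where "T' = foldl invert T Xs"
    have T't: "tournament V T'" using foldl_invert_tour[OF T] T'_def by simp
    have "T' \<in> S"
      unfolding S_def Sw_def
    proof (intro CollectI conjI allI impI)
      show "tournament {0..<n} T'" using T't V_def by simp
      fix v assume "v < n"
      then have v: "v \<in> V" using V_def by simp
      have w: "k \<le> outdeg T' v \<and> k \<le> indeg T' v"
        using strong_window[OF T't _ v n2] Xs(3) T'_def by simp
      have "outdeg T' v + indeg T' v + 1 = card V" by (rule out_in_sum[OF T't v])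
      then show "outdeg T' v \<in> {k..<k + c}" using w n V_def by simp
    qed
    moreover have "Xs \<in> L" using Xs L_def by simp
    moreover have "T = foldl invert T' (rev Xs)" unfolding T'_def by (rule foldl_invert_rev[symmetric])
    ultimately show "T \<in> (\<lambda>(T', Xs). foldl invert T' (rev Xs)) ` (S \<times> L)" by force
  qed
  have fV: "finite V" using V_def by simp
  have fS: "finite S" unfolding S_def Sw_def by (rule finite_subset[OF _ finite_tour[of n]]) auto
  have fL: "finite L" unfolding L_def using finite_lists_length_eq[of "Pow V" t] fV by simp
  have cL: "card L = (2^n)^t" unfolding L_def using card_lists_length_eq[of "Pow V" t] fV
    by (simp add: card_Pow V_def)
  have "card Tn \<le> card ((\<lambda>(T', Xs). foldl invert T' (rev Xs)) ` (S \<times> L))"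
    by (rule card_mono[OF finite_imageI sub]) (use fS fL in simp)
  also have "\<dots> \<le> card (S \<times> L)" by (rule card_image_le) (use fS fL in simp)
  also have "\<dots> = card S * (2^n)^t" by (simp add: card_cartesian_product cL)
  finally have "real (card Tn) \<le> real (card S * (2^n)^t)" by (simp only: of_nat_le_iff)
  then have "real (card Tn) \<le> real (card S) * (2^n)^t" by simp
  also have "\<dots> \<le> (\<Prod>m<n. real c * 2^m / sqrt (real m + 1)) * (2^n)^t"
  proof (rule mult_right_mono)
    show "real (card S) \<le> (\<Prod>m<n. real c * 2^m / sqrt (real m + 1))"
      unfolding S_def by (rule count_Sw) simp
  qed simp
  also have "\<dots> = (\<Prod>m<n. real c * 2^t / sqrt (real m + 1)) * (\<Prod>m<n. 2^m)"
  proof -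
    have "((2::real)^n)^t = (2^t)^n" by (metis power_mult mult.commute)
    also have "\<dots> = (\<Prod>m<n. 2^t)" by simp
    finally have "((2::real)^n)^t = (\<Prod>m<n. 2^t)" .
    then have "(\<Prod>m<n. real c * 2^m / sqrt (real m + 1)) * (2^n)^t =
        (\<Prod>m<n. (real c * 2^m / sqrt (real m + 1)) * 2^t)" by (simp only: prod.distrib)
    also have "\<dots> = (\<Prod>m<n. (real c * 2^t / sqrt (real m + 1)) * 2^m)"
      by (rule prod.cong) (simp_all add: field_simps)
    also have "\<dots> = (\<Prod>m<n. real c * 2^t / sqrt (real m + 1)) * (\<Prod>m<n. 2^m)"
      by (rule prod.distrib)
    finally show ?thesis .
  qed
  also have "\<dots> < 1 * (\<Prod>m<n. 2^m)"
  proof (rule mult_strict_right_mono)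
    show "(\<Prod>m<n. real c * 2^t / sqrt (real m + 1)) < 1"
      by (rule final_prod_bound) (use n k1 tb in auto)
  qed (simp add: prod_pos)
  also have "\<dots> = real (card Tn)" using card_tour[of n] Tn_def V_def by simp
  finally show False by simp
qed




lemma log_bound:
  assumes c1: "c \<ge> 1" and n1: "n \<ge> 1" and tb: "real t \<le> 1/2 * log 2 (real n) - log 2 (real (2*c))"
  shows "real c * 2^t \<le> sqrt (real n) / 2"
proof -
  have pos1: "0 < real (2*c) * 2^t" using c1 by simp
  have pos2: "0 < sqrt (real n)" using n1 by simp
  have "log 2 (real (2*c) * 2^t) = log 2 (real (2*c)) + real t"
    using c1 by (simp add: log_mult log_nat_power)
  also have "\<dots> \<le> 1/2 * log 2 (real n)" using tb by simp
  also have "\<dots> = log 2 (sqrt (real n))"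
  proof -
    have "sqrt (real n) = real n powr (1/2)" by (simp add: powr_half_sqrt)
    then show ?thesis by (simp add: log_powr)
  qed
  finally have "real (2*c) * 2^t \<le> sqrt (real n)"
    using log_le_cancel_iff[of 2 "real (2*c) * 2^t" "sqrt (real n)"] pos1 pos2 by simp
  then show ?thesis by simp
qed

lemma part1:
  assumes c1: "c \<ge> 1" and k1: "k \<ge> 1"
  shows "\<exists>T. tournament {0..<2*k+c} T \<and>
            real (sinv' k {0..<2*k+c} T) > 1/2 * log 2 (real (2*k+c)) - log 2 (real (2*c))"
proof -
  define n where "n = 2*k+c"
  define b where "b = 1/2 * log 2 (real n) - log 2 (real (2*c))"
  have reach: "\<exists>Xs. length Xs = length Xs \<and> set Xs \<subseteq> Pow {0..<n} \<and> arc_strong k {0..<n} (foldl invert T Xs)"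
    if T: "tournament {0..<n} T" for T
  proof -
    obtain Xs where X1: "set Xs \<subseteq> Pow {0..<n}" and X2: "foldl invert T Xs = T0 n"
      using reach_any[OF T T0_tour] by blast
    have "arc_strong k {0..<n} (T0 n)" by (rule T0_strong) (use n_def c1 in simp)
    then have "length Xs = length Xs \<and> set Xs \<subseteq> Pow {0..<n} \<and> arc_strong k {0..<n} (foldl invert T Xs)"
      using X1 X2 by simp
    then show ?thesis by (rule exI)
  qed
  show ?thesis
  proof (cases "b < 0")
    case True
    have "real (sinv' k {0..<n} (T0 n)) > b" using True by (meson of_nat_0_le_iff order_less_le_trans)
    then show ?thesis using T0_tour b_def n_def by blast
  next
    case False
    define t where "t = nat \<lfloor>b\<rfloor>"
    have tb: "real t \<le> b" using False t_def by linarith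
    have tb2: "b < real t + 1" using False t_def by linarith
    have n1: "n \<ge> 1" using n_def c1 by simp
    have tb': "real t \<le> 1/2 * log 2 (real n) - log 2 (real (2*c))" using tb b_def by simp
    have "real c * 2^t \<le> sqrt (real n) / 2" by (rule log_bound[OF c1 n1 tb'])
    from main_count[OF k1 c1 n_def this] obtain T where T: "tournament {0..<n} T" and
      noT: "\<not> (\<exists>Xs. length Xs = t \<and> set Xs \<subseteq> Pow {0..<n} \<and> arc_strong k {0..<n} (foldl invert T Xs))"
      by blast
    define P where "P = (\<lambda>m. \<exists>Xs. length Xs = m \<and> set Xs \<subseteq> Pow {0..<n} \<and> arc_strong k {0..<n} (foldl invert T Xs))"
    have ex: "\<exists>m. P m" using reach[OF T] P_def by blast
    have Ps: "P (sinv' k {0..<n} T)" unfolding sinv'_def P_def[symmetric] using ex by (rule LeastI_ex)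
    have "sinv' k {0..<n} T > t"
    proof (rule ccontr)
      assume "\<not> t < sinv' k {0..<n} T"
      then have le: "sinv' k {0..<n} T \<le> t" by simp
      obtain Xs where Xs: "length Xs = sinv' k {0..<n} T" "set Xs \<subseteq> Pow {0..<n}"
        "arc_strong k {0..<n} (foldl invert T Xs)" using Ps P_def by blast
      define Ys where "Ys = Xs @ replicate (t - sinv' k {0..<n} T) {}"
      have "length Ys = t" using Xs(1) le Ys_def by simp
      moreover have "set Ys \<subseteq> Pow {0..<n}" using Xs(2) Ys_def by auto
      moreover have "foldl invert T Ys = foldl invert T Xs" using Ys_def by (simp add: foldl_invert_empties)
      ultimately have "length Ys = t \<and> set Ys \<subseteq> Pow {0..<n} \<and> arc_strong k {0..<n} (foldl invert T Ys)"
        using Xs(3) by simp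
      then show False using noT by blast
    qed
    then have "real (sinv' k {0..<n} T) \<ge> real t + 1" by simp
    then have "real (sinv' k {0..<n} T) > b" using tb2 by linarith
    then show ?thesis using T b_def n_def by blast
  qed
qed

theorem theorem5p7:
  shows "(\<forall>c::nat. c > 0 \<longrightarrow> (\<exists>K. \<forall>k\<ge>K. \<exists>T.
            tournament {0..<2*k+c} T \<and>
            real (sinv' k {0..<2*k+c} T) > 1/2 * log 2 (real (2*k+c)) - log 2 (real (2*c))))
       \<and> (\<forall>c::nat. c > 0 \<longrightarrow> (\<forall>B::nat. \<exists>k. m' k (2*k+c) > B))"
proof (intro conjI allI impI)
  fix c :: nat assume "c > 0"
  then have c1: "c \<ge> 1" by simp
  show "\<exists>K. \<forall>k\<ge>K. \<exists>T. tournament {0..<2*k+c} T \<and>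
            real (sinv' k {0..<2*k+c} T) > 1/2 * log 2 (real (2*k+c)) - log 2 (real (2*c))"
    by (rule exI[of _ 1]) (use part1[OF c1] in auto)
next
  fix c :: nat and B :: nat assume "c > 0"
  then have c1: "c \<ge> 1" by simp
  define k where "k = 4^B * (2*c)^2"
  have k1: "k \<ge> 1" using c1 k_def by simp
  define n where "n = 2*k+c"
  obtain T where T: "tournament {0..<n} T"
    and sb: "real (sinv' k {0..<n} T) > 1/2 * log 2 (real n) - log 2 (real (2*c))"
    using part1[OF c1 k1] n_def by blast
  have "real B \<le> 1/2 * log 2 (real n) - log 2 (real (2*c))"
  proof -
    have kpos: "(0::real) < real k" using k1 by simp
    have "real k \<le> real n" using n_def by simp
    then have "log 2 (real k) \<le> log 2 (real n)" using kpos by simp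
    moreover have "log 2 (real k) = 2 * real B + 2 * log 2 (real (2*c))"
    proof -
      have "real k = 4^B * (real (2*c))^2" using k_def by simp
      then have "log 2 (real k) = log 2 (4^B) + log 2 ((real (2*c))^2)"
        using c1 by (simp add: log_mult)
      also have "log 2 (4^B) = real B * log 2 4" by (simp add: log_nat_power)
      also have "log 2 (4::real) = 2"
      proof -
        have "log 2 (4::real) = log 2 (2^2)" by simp
        also have "\<dots> = real 2 * log 2 2" by (rule log_nat_power) simp
        finally show ?thesis by simp
      qed
      also have "log 2 ((real (2*c))^2) = real 2 * log 2 (real (2*c))" by (rule log_nat_power) simp
      finally show ?thesis by simp
    qed
    ultimately show ?thesis by simp
  qed
  then have "real B < real (sinv' k {0..<n} T)" using sb by linarith
  then have lt: "B < sinv' k {0..<n} T" by simp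
  have fin: "finite {sinv' k {0..<n} A | A. tournament {0..<n} A}"
  proof -
    have "{sinv' k {0..<n} A | A. tournament {0..<n} A} = (\<lambda>A. sinv' k {0..<n} A) ` {A. tournament {0..<n} A}"
      by auto
    then show ?thesis using finite_tour[of n] by simp
  qed
  have "sinv' k {0..<n} T \<le> m' k n" unfolding m'_def
    by (rule Max_ge[OF fin]) (use T in blast)
  then show "\<exists>k. B < m' k (2*k+c)" using lt n_def by (intro exI[of _ k]) simp
qed


end
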